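(* Assume $\mathbf{P.0}$ has an optimal solution, with optimal value $OPT$. Then $\mathbf{P.2}$ has a feasible solution, and an optimal solution $A^{P2}$ of $\mathbf{P.2}$ satisfies $f(A^{P2})\ge (1-1/e)^2\, OPT$. In particular, there exists a set $A\subseteq V$ with $|A|\le b$, $\lfloor\alpha_t\rfloor\le|A\cap V_t|\le\lceil\beta_t\rceil$ for all $t\in[m]$, and $f(A)\ge(1-1/e)^2\,OPT$.
   Context: Let $V$ be a finite set of $n$ items and $f:2^V\to\mathbb{R}_{\ge 0}$ a non-negative monotone submodular function. Items are divided into pairwise disjoint groups $V_1,\dots,V_m$ with $V=V_1\cup\dots\cup V_m$; $\alpha,\beta\in\mathbb{R}_{\ge 0}^m$ and $b$ is a positive integer. Let $\mathcal{F}=\{S\subseteq V: |S|\le b\}$. Problem $\mathbf{P.0}$: maximize $\sum_{S\in\mathcal{F}} x_S f(S)$ over $x\in[0,1]^{\mathcal{F}}$ subject to $\alpha_t\le \sum_{S\in\mathcal{F}} x_S |S\cap V_t|\le \beta_t$ for all $t\in[m]$ and $\sum_{S\in\mathcal{F}}x_S\le 1$; $OPT$ denotes its optimal value. Problem $\mathbf{P.2}$: maximize $f(S)$ over $S\in\mathcal{F}$ subject to $\lfloor\alpha_t\rfloor\le|S\cap V_t|\le\lceil\beta_t\rceil$ for all $t\in[m]$. *)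

theory Defs
  imports Complex_Main
begin

definition monotone_set_fun :: "'a set \<Rightarrow> ('a set \<Rightarrow> real) \<Rightarrow> bool" where
  "monotone_set_fun V f \<longleftrightarrow> (\<forall>A B. A \<subseteq> B \<and> B \<subseteq> V \<longrightarrow> f A \<le> f B)"

definition submodular :: "'a set \<Rightarrow> ('a set \<Rightarrow> real) \<Rightarrow> bool" where
  "submodular V f \<longleftrightarrow>
     (\<forall>A B. A \<subseteq> V \<and> B \<subseteq> V \<longrightarrow> f (A \<union> B) + f (A \<inter> B) \<le> f A + f B)"

definition fam :: "'a set \<Rightarrow> nat \<Rightarrow> 'a set set" where
  "fam V b = {S. S \<subseteq> V \<and> card S \<le> b}"

text \<open>Feasibility for problem P.0: x is a vector indexed by F (values outside F irrelevant),
  groups are G 0, ..., G (m-1).\<close>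
definition P0_feasible ::
  "'a set \<Rightarrow> nat \<Rightarrow> (nat \<Rightarrow> 'a set) \<Rightarrow> (nat \<Rightarrow> real) \<Rightarrow> (nat \<Rightarrow> real) \<Rightarrow> nat
    \<Rightarrow> ('a set \<Rightarrow> real) \<Rightarrow> bool" where
  "P0_feasible V m G \<alpha> \<beta> b x \<longleftrightarrow>
     (\<forall>S\<in>fam V b. 0 \<le> x S \<and> x S \<le> 1) \<and>
     (\<forall>t<m. \<alpha> t \<le> (\<Sum>S\<in>fam V b. x S * real (card (S \<inter> G t))) \<and>
            (\<Sum>S\<in>fam V b. x S * real (card (S \<inter> G t))) \<le> \<beta> t) \<and>
     (\<Sum>S\<in>fam V b. x S) \<le> 1"

definition P0_value :: "'a set \<Rightarrow> nat \<Rightarrow> ('a set \<Rightarrow> real) \<Rightarrow> ('a set \<Rightarrow> real) \<Rightarrow> real" where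
  "P0_value V b f x = (\<Sum>S\<in>fam V b. x S * f S)"

definition P0_optimal ::
  "'a set \<Rightarrow> nat \<Rightarrow> (nat \<Rightarrow> 'a set) \<Rightarrow> (nat \<Rightarrow> real) \<Rightarrow> (nat \<Rightarrow> real) \<Rightarrow> nat
    \<Rightarrow> ('a set \<Rightarrow> real) \<Rightarrow> ('a set \<Rightarrow> real) \<Rightarrow> bool" where
  "P0_optimal V m G \<alpha> \<beta> b f x \<longleftrightarrow>
     P0_feasible V m G \<alpha> \<beta> b x \<and>
     (\<forall>y. P0_feasible V m G \<alpha> \<beta> b y \<longrightarrow> P0_value V b f y \<le> P0_value V b f x)"

definition P2_feasible ::
  "'a set \<Rightarrow> nat \<Rightarrow> (nat \<Rightarrow> 'a set) \<Rightarrow> (nat \<Rightarrow> real) \<Rightarrow> (nat \<Rightarrow> real) \<Rightarrow> nat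
    \<Rightarrow> 'a set \<Rightarrow> bool" where
  "P2_feasible V m G \<alpha> \<beta> b S \<longleftrightarrow>
     S \<in> fam V b \<and>
     (\<forall>t<m. \<lfloor>\<alpha> t\<rfloor> \<le> int (card (S \<inter> G t)) \<and> int (card (S \<inter> G t)) \<le> \<lceil>\<beta> t\<rceil>)"

definition P2_optimal ::
  "'a set \<Rightarrow> nat \<Rightarrow> (nat \<Rightarrow> 'a set) \<Rightarrow> (nat \<Rightarrow> real) \<Rightarrow> (nat \<Rightarrow> real) \<Rightarrow> nat
    \<Rightarrow> ('a set \<Rightarrow> real) \<Rightarrow> 'a set \<Rightarrow> bool" where
  "P2_optimal V m G \<alpha> \<beta> b f S \<longleftrightarrow>
     P2_feasible V m G \<alpha> \<beta> b S \<and>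
     (\<forall>T. P2_feasible V m G \<alpha> \<beta> b T \<longrightarrow> f T \<le> f S)"

end

theory Submission
  imports Defs
begin

lemma greedy_exists:
  fixes V :: "'a set" and M :: "'a set set" and f :: "'a set \<Rightarrow> real"
  assumes finV: "finite V" and MV: "M \<subseteq> Pow V" and M0: "{} \<in> M"
  defines "gl vs \<equiv> distinct vs \<and> set vs \<subseteq> V \<and> (\<forall>i<length vs. set (take (Suc i) vs) \<in> M \<and>
      (\<forall>u\<in>V - set (take i vs). insert u (set (take i vs)) \<in> M \<longrightarrow>
          f (insert u (set (take i vs))) - f (set (take i vs)) \<le> f (set (take (Suc i) vs)) - f (set (take i vs))))"
  shows "\<exists>vs. gl vs \<and> set vs \<in> M \<and> (\<forall>u\<in>V - set vs. insert u (set vs) \<notin> M)"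
proof -
  let ?L = "{vs. gl vs}"
  have fin: "finite ?L"
    by (rule finite_subset[OF _ finite_lists_length_le[OF finV, of "card V"]])
       (auto simp: gl_def intro: distinct_card[THEN subst] card_mono[OF finV])
  have ne: "[] \<in> ?L" by (simp add: gl_def)
  obtain vs where vsL: "vs \<in> ?L" and vsmax: "\<forall>ws\<in>?L. length ws \<le> length vs"
  proof -
    let ?n = "Max (length ` ?L)"
    have "?n \<in> length ` ?L" using fin ne by (intro Max_in) auto
    then obtain vs where "vs \<in> ?L" "length vs = ?n" by auto
    moreover have "\<forall>ws\<in>?L. length ws \<le> ?n" using fin by auto
    ultimately show ?thesis using that by auto
  qed
  have glvs: "gl vs" using vsL by simp
  have inM: "set vs \<in> M"
  proof (cases "vs = []")
    case True then show ?thesis using M0 by simp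
  next
    case False
    then have "length vs - 1 < length vs" by simp
    then have "set (take (Suc (length vs - 1)) vs) \<in> M" using glvs unfolding gl_def by blast
    moreover have "Suc (length vs - 1) = length vs" using False by simp
    ultimately show ?thesis by simp
  qed
  have maxl: "\<forall>u\<in>V - set vs. insert u (set vs) \<notin> M"
  proof (rule ccontr)
    assume nt: "\<not> (\<forall>u\<in>V - set vs. insert u (set vs) \<notin> M)"
    define C where "C = {u\<in>V - set vs. insert u (set vs) \<in> M}"
    have Cne: "C \<noteq> {}" and Cfin: "finite C" using nt finV unfolding C_def by auto
    obtain u where uC: "u \<in> C" and umax: "\<forall>u'\<in>C. f (insert u' (set vs)) \<le> f (insert u (set vs))"
    proof -
      let ?mx = "Max ((\<lambda>u. f (insert u (set vs))) ` C)"
      have "?mx \<in> (\<lambda>u. f (insert u (set vs))) ` C" using Cne Cfin by (intro Max_in) auto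
      then obtain u where "u \<in> C" "f (insert u (set vs)) = ?mx" by auto
      moreover have "\<forall>u'\<in>C. f (insert u' (set vs)) \<le> ?mx" using Cfin by auto
      ultimately show ?thesis using that by auto
    qed
    have "gl (vs @ [u])"
      unfolding gl_def
    proof (intro conjI allI impI)
      show "distinct (vs @ [u])" using glvs uC unfolding gl_def C_def by auto
      show "set (vs @ [u]) \<subseteq> V" using glvs uC unfolding gl_def C_def by auto
    next
      fix i assume i: "i < length (vs @ [u])"
      show "set (take (Suc i) (vs @ [u])) \<in> M"
      proof (cases "i < length vs")
        case True then show ?thesis using glvs unfolding gl_def by simp
      next
        case False then have "i = length vs" using i by simp
        then show ?thesis using uC unfolding C_def by simp
      qed
      show "\<forall>u'\<in>V - set (take i (vs @ [u])). insert u' (set (take i (vs @ [u]))) \<in> M \<longrightarrow>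
          f (insert u' (set (take i (vs @ [u])))) - f (set (take i (vs @ [u])))
          \<le> f (set (take (Suc i) (vs @ [u]))) - f (set (take i (vs @ [u])))"
      proof (cases "i < length vs")
        case True then show ?thesis using glvs unfolding gl_def by simp
      next
        case False then have "i = length vs" using i by simp
        then show ?thesis using umax unfolding C_def by simp
      qed
    qed
    then have "length (vs @ [u]) \<le> length vs" using vsmax by blast
    then show False by simp
  qed
  show ?thesis using glvs inM maxl by blast
qed
lemma abel_bound:
  fixes w g :: "nat \<Rightarrow> real"
  assumes "\<forall>i j. i \<le> j \<longrightarrow> j < r \<longrightarrow> g j \<le> g i"
    and "\<forall>i<r. 0 \<le> g i"
    and "\<forall>i<r. (\<Sum>k\<le>i. w k) \<le> real (Suc i)"
  shows "(\<Sum>i<r. w i * g i) \<le> (\<Sum>i<r. g i)"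
  using assms
proof (induction r arbitrary: g)
  case 0
  then show ?case by simp
next
  case (Suc r)
  define c where "c = g r"
  define g' where "g' i = g i - c" for i
  have c0: "0 \<le> c" using Suc.prems(2) c_def by simp
  have IH: "(\<Sum>i<r. w i * g' i) \<le> (\<Sum>i<r. g' i)"
    apply (rule Suc.IH)
    using Suc.prems unfolding g'_def c_def by auto
  have W: "(\<Sum>i<Suc r. w i) \<le> real (Suc r)"
    using Suc.prems(3) lessThan_Suc_atMost by auto
  have "(\<Sum>i<Suc r. w i * g i) = (\<Sum>i<Suc r. w i * g' i) + c * (\<Sum>i<Suc r. w i)"
    unfolding g'_def sum_distrib_left sum.distrib[symmetric] by (rule sum.cong) (auto simp: algebra_simps)
  also have "(\<Sum>i<Suc r. w i * g' i) = (\<Sum>i<r. w i * g' i)"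
    by (simp add: g'_def c_def)
  also have "c * (\<Sum>i<Suc r. w i) \<le> c * real (Suc r)"
    using W c0 by (simp add: mult_left_mono)
  finally have "(\<Sum>i<Suc r. w i * g i) \<le> (\<Sum>i<r. g' i) + c * real (Suc r)"
    using IH by linarith
  also have "\<dots> = (\<Sum>i<Suc r. g i)"
    by (simp add: g'_def c_def sum_subtractf algebra_simps)
  finally show ?case .
qed


lemma sum_if_Suc:
  fixes c :: real
  assumes "finite A"
  shows "(\<Sum>k\<in>A. if j = Suc k then c else 0) = (if j \<noteq> 0 \<and> j - 1 \<in> A then c else 0)"
proof (cases j)
  case 0 then show ?thesis by simp
next
  case (Suc k0)
  then show ?thesis using assms by (simp add: sum.delta')
qed

lemma greedy_bound:
  fixes V :: "'a set" and M :: "'a set set" and f :: "'a set \<Rightarrow> real" and z :: "'a \<Rightarrow> real"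
  assumes finV: "finite V" and MV: "M \<subseteq> Pow V" and M0: "{} \<in> M"
    and down: "\<forall>A B. A \<subseteq> B \<longrightarrow> B \<in> M \<longrightarrow> A \<in> M"
    and mono: "\<forall>A B. A \<subseteq> B \<longrightarrow> B \<subseteq> V \<longrightarrow> f A \<le> f B"
    and marg: "\<forall>A B u. A \<subseteq> B \<longrightarrow> B \<subseteq> V \<longrightarrow> u \<in> V \<longrightarrow> f (insert u B) - f B \<le> f (insert u A) - f A"
    and znn: "\<forall>u\<in>V. 0 \<le> z u"
    and zD: "\<forall>H\<in>M. (\<Sum>u\<in>{u\<in>V - H. insert u H \<notin> M}. z u) \<le> real (card H)"
  shows "\<exists>G\<in>M. (\<Sum>u\<in>V - G. z u * (f (insert u G) - f G)) \<le> f G - f {}"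
proof -
  obtain vs where dist: "distinct vs" and vsV: "set vs \<subseteq> V"
    and gr: "\<forall>i<length vs. set (take (Suc i) vs) \<in> M \<and>
      (\<forall>u\<in>V - set (take i vs). insert u (set (take i vs)) \<in> M \<longrightarrow>
          f (insert u (set (take i vs))) - f (set (take i vs)) \<le> f (set (take (Suc i) vs)) - f (set (take i vs)))"
    and GM: "set vs \<in> M" and maxl: "\<forall>u\<in>V - set vs. insert u (set vs) \<notin> M"
    using greedy_exists[OF finV MV M0, of f] by blast
  define r where "r = length vs"
  define Gi where "Gi i = set (take i vs)" for i
  define G where "G = set vs"
  define g where "g i = f (Gi (Suc i)) - f (Gi i)" for i
  have Gi_mono: "Gi i \<subseteq> Gi j" if "i \<le> j" for i j
    unfolding Gi_def using that by (simp add: set_take_subset_set_take)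
  have GiG: "Gi i \<subseteq> G" for i unfolding Gi_def G_def by (rule set_take_subset)
  have GV: "G \<subseteq> V" using vsV G_def by simp
  have GiV: "Gi i \<subseteq> V" for i using GiG GV by blast
  have Gir: "Gi r = G" unfolding Gi_def G_def r_def by simp
  have Gi0: "Gi 0 = {}" unfolding Gi_def by simp
  have GiSuc: "Gi (Suc i) = insert (vs ! i) (Gi i)" if "i < r" for i
    using that unfolding Gi_def r_def by (simp add: take_Suc_conv_app_nth)
  have nth_notin: "vs ! j \<notin> Gi i" if "i \<le> j" "j < r" for i j
  proof -
    have "distinct (take (Suc j) vs)" using dist by simp
    then have "vs ! j \<notin> set (take j vs)" using that(2) unfolding r_def by (simp add: take_Suc_conv_app_nth)
    then show ?thesis using Gi_mono[OF that(1)] unfolding Gi_def by blast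
  qed
  have nthV: "vs ! j \<in> V" if "j < r" for j using that vsV unfolding r_def by auto
  have cardGi: "card (Gi i) = i" if "i \<le> r" for i
    using that dist unfolding Gi_def r_def by (simp add: distinct_card)
  have GiM: "Gi (Suc i) \<in> M" if "i < r" for i using gr that unfolding Gi_def r_def by blast
  have greedy: "f (insert u (Gi i)) - f (Gi i) \<le> g i"
    if "i < r" "u \<in> V - Gi i" "insert u (Gi i) \<in> M" for i u
    using gr that unfolding Gi_def r_def g_def by blast
  have gmono: "\<forall>i j. i \<le> j \<longrightarrow> j < r \<longrightarrow> g j \<le> g i"
  proof (intro allI impI)
    fix i j assume ij: "i \<le> j" "j < r"
    have "g j = f (insert (vs ! j) (Gi j)) - f (Gi j)" unfolding g_def using GiSuc[OF ij(2)] by simp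
    also have "\<dots> \<le> f (insert (vs ! j) (Gi i)) - f (Gi i)"
      using marg Gi_mono[OF ij(1)] GiV nthV[OF ij(2)] by blast
    also have "\<dots> \<le> g i"
    proof (rule greedy)
      show "i < r" using ij by simp
      show "vs ! j \<in> V - Gi i" using nthV[OF ij(2)] nth_notin[OF ij] by simp
      have "insert (vs ! j) (Gi i) \<subseteq> Gi (Suc j)" using GiSuc[OF ij(2)] Gi_mono[OF ij(1)] by blast
      then show "insert (vs ! j) (Gi i) \<in> M" using down GiM[OF ij(2)] by blast
    qed
    finally show "g j \<le> g i" .
  qed
  have gnn: "\<forall>i<r. 0 \<le> g i"
    using mono GiV unfolding g_def by (metis Gi_mono diff_ge_0_iff_ge le_SucI order_refl)
  define J where "J u = (LEAST i. insert u (Gi i) \<notin> M)" for u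
  have Jex: "insert u (Gi r) \<notin> M" if "u \<in> V - G" for u using maxl that Gir G_def by simp
  have Jle: "J u \<le> r" if "u \<in> V - G" for u unfolding J_def by (rule Least_le) (rule Jex[OF that])
  have Jnot: "insert u (Gi (J u)) \<notin> M" if "u \<in> V - G" for u unfolding J_def by (rule LeastI) (rule Jex[OF that])
  have Jbefore: "insert u (Gi i) \<in> M" if "i < J u" for u i using not_less_Least[of i] that unfolding J_def by blast
  define w where "w k = (\<Sum>u\<in>V - G. if J u = Suc k then z u else 0)" for k
  define \<phi> where "\<phi> u = (\<Sum>k<r. if J u = Suc k then z u * g k else 0)" for u
  have D0: "z u = 0" if "u \<in> V - G" "J u = 0" for u
  proof -
    have uD: "u \<in> {u\<in>V - {}. insert u {} \<notin> M}" using Jnot[OF that(1)] that Gi0 by simp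
    have "z u \<le> (\<Sum>u\<in>{u\<in>V - {}. insert u {} \<notin> M}. z u)"
      by (rule member_le_sum) (use uD znn finV in auto)
    also have "\<dots> \<le> 0" using zD M0 by fastforce
    finally show ?thesis using znn that by force
  qed
  have pt: "z u * (f (insert u G) - f G) \<le> \<phi> u" if u: "u \<in> V - G" for u
  proof (cases "J u")
    case 0 then show ?thesis using D0[OF u] unfolding \<phi>_def by simp
  next
    case (Suc k)
    have kr: "k < r" using Jle[OF u] Suc by simp
    have "\<phi> u = z u * g k" unfolding \<phi>_def using Suc kr by (simp add: sum.delta)
    moreover have "f (insert u G) - f G \<le> g k"
    proof -
      have "f (insert u G) - f G \<le> f (insert u (Gi k)) - f (Gi k)"
        using marg GiG GV u by blast
      also have "\<dots> \<le> g k"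
        by (rule greedy) (use kr u GiG Jbefore[of k u] Suc in auto)
      finally show ?thesis .
    qed
    ultimately show ?thesis using znn u by (simp add: mult_left_mono)
  qed
  have sw: "(\<Sum>u\<in>V - G. \<phi> u) = (\<Sum>k<r. w k * g k)"
    unfolding \<phi>_def w_def sum_distrib_right
    by (subst sum.swap) (rule sum.cong, auto intro: sum.cong)
  have pre: "\<forall>i<r. (\<Sum>k\<le>i. w k) \<le> real (Suc i)"
  proof (intro allI impI)
    fix i assume ir: "i < r"
    have "(\<Sum>k\<le>i. w k) = (\<Sum>u\<in>V - G. (\<Sum>k\<le>i. if J u = Suc k then z u else 0))"
      unfolding w_def by (rule sum.swap)
    also have "\<dots> = (\<Sum>u\<in>V - G. if J u \<noteq> 0 \<and> J u - 1 \<in> {..i} then z u else 0)"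
      by (simp only: sum_if_Suc[OF finite_atMost])
    also have "\<dots> = (\<Sum>u\<in>{u\<in>V - G. J u \<noteq> 0 \<and> J u - 1 \<in> {..i}}. z u)"
      by (rule sum.inter_filter[symmetric]) (simp add: finV)
    also have "\<dots> \<le> (\<Sum>u\<in>{u\<in>V - Gi (Suc i). insert u (Gi (Suc i)) \<notin> M}. z u)"
    proof (rule sum_mono2)
      show "finite {u\<in>V - Gi (Suc i). insert u (Gi (Suc i)) \<notin> M}" using finV by simp
      show "{u\<in>V - G. J u \<noteq> 0 \<and> J u - 1 \<in> {..i}} \<subseteq> {u\<in>V - Gi (Suc i). insert u (Gi (Suc i)) \<notin> M}"
      proof
        fix u assume "u \<in> {u\<in>V - G. J u \<noteq> 0 \<and> J u - 1 \<in> {..i}}"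
        then have u: "u \<in> V - G" and Jl: "J u \<le> Suc i" by auto
        have "insert u (Gi (J u)) \<subseteq> insert u (Gi (Suc i))" using Gi_mono[OF Jl] by blast
        then have "insert u (Gi (Suc i)) \<notin> M" using Jnot[OF u] down by blast
        then show "u \<in> {u\<in>V - Gi (Suc i). insert u (Gi (Suc i)) \<notin> M}" using u GiG by blast
      qed
      fix b assume "b \<in> {u\<in>V - Gi (Suc i). insert u (Gi (Suc i)) \<notin> M} - {u\<in>V - G. J u \<noteq> 0 \<and> J u - 1 \<in> {..i}}"
      then show "0 \<le> z b" using znn by blast
    qed
    also have "\<dots> \<le> real (card (Gi (Suc i)))" using zD GiM[OF ir] by blast
    also have "\<dots> = real (Suc i)" using cardGi[of "Suc i"] ir by simp
    finally show "(\<Sum>k\<le>i. w k) \<le> real (Suc i)" .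
  qed
  have "(\<Sum>u\<in>V - G. z u * (f (insert u G) - f G)) \<le> (\<Sum>u\<in>V - G. \<phi> u)"
    by (rule sum_mono) (rule pt)
  also have "\<dots> = (\<Sum>k<r. w k * g k)" by (rule sw)
  also have "\<dots> \<le> (\<Sum>k<r. g k)" by (rule abel_bound[OF gmono gnn pre])
  also have "\<dots> = f G - f {}"
    unfolding g_def using sum_lessThan_telescope[of "\<lambda>i. f (Gi i)" r] Gir Gi0 by simp
  finally show ?thesis using GM G_def by blast
qed



lemma marg_of_submod:
  assumes mono: "monotone_set_fun V f" and sub: "submodular V f"
    and AB: "A \<subseteq> B" and BV: "B \<subseteq> V" and u: "u \<in> V"
  shows "f (insert u B) - f B \<le> f (insert u A) - f A"
proof (cases "u \<in> B")
  case True
  then have "insert u B = B" by blast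
  moreover have "f A \<le> f (insert u A)" using mono AB BV u unfolding monotone_set_fun_def by blast
  ultimately show ?thesis by simp
next
  case False
  have "insert u A \<union> B = insert u B" using AB by blast
  moreover have "insert u A \<inter> B = A" using AB False by blast
  moreover have "insert u A \<subseteq> V" using AB BV u by blast
  ultimately have "f (insert u B) + f A \<le> f (insert u A) + f B"
    using sub BV unfolding submodular_def by metis
  then show ?thesis by simp
qed

lemma subadd_marg:
  assumes mono: "monotone_set_fun V f" and sub: "submodular V f"
    and GV: "Gr \<subseteq> V" and fin: "finite S"
  shows "S \<subseteq> V \<Longrightarrow> f (Gr \<union> S) \<le> f Gr + (\<Sum>u\<in>S - Gr. f (insert u Gr) - f Gr)"
  using fin
proof (induction S rule: finite_induct)
  case empty then show ?case by simp
next
  case (insert a S)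
  have IH: "f (Gr \<union> S) \<le> f Gr + (\<Sum>u\<in>S - Gr. f (insert u Gr) - f Gr)" using insert by simp
  show ?case
  proof (cases "a \<in> Gr")
    case True
    then have "Gr \<union> insert a S = Gr \<union> S" "insert a S - Gr = S - Gr" by auto
    then show ?thesis using IH by simp
  next
    case False
    have e1: "insert a S - Gr = insert a (S - Gr)" using False by blast
    have "f (Gr \<union> insert a S) - f (Gr \<union> S) \<le> f (insert a Gr) - f Gr"
      using marg_of_submod[OF mono sub, of Gr "Gr \<union> S" a] GV insert by simp
    then show ?thesis using IH insert(2) e1 insert(1) by simp
  qed
qed

theorem lemma3:
  fixes V :: "'a set" and f :: "'a set \<Rightarrow> real" and m :: nat and G :: "nat \<Rightarrow> 'a set"
    and \<alpha> \<beta> :: "nat \<Rightarrow> real" and b :: nat and x :: "'a set \<Rightarrow> real" and OPT :: real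
  assumes finV: "finite V"
    and f_nonneg: "\<forall>S. S \<subseteq> V \<longrightarrow> 0 \<le> f S"
    and f_mono: "monotone_set_fun V f"
    and f_submod: "submodular V f"
    and groups_disj: "\<forall>i<m. \<forall>j<m. i \<noteq> j \<longrightarrow> G i \<inter> G j = {}"
    and groups_cover: "(\<Union>t<m. G t) = V"
    and alpha_nonneg: "\<forall>t<m. 0 \<le> \<alpha> t"
    and beta_nonneg: "\<forall>t<m. 0 \<le> \<beta> t"
    and b_pos: "0 < b"
    and x_opt: "P0_optimal V m G \<alpha> \<beta> b f x"
    and OPT_def: "OPT = P0_value V b f x"
  shows "(\<exists>S. P2_feasible V m G \<alpha> \<beta> b S)
       \<and> (\<forall>A. P2_optimal V m G \<alpha> \<beta> b f A \<longrightarrow> f A \<ge> (1 - 1 / exp 1)^2 * OPT)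
       \<and> (\<exists>A. A \<subseteq> V \<and> card A \<le> b
              \<and> (\<forall>t<m. \<lfloor>\<alpha> t\<rfloor> \<le> int (card (A \<inter> G t)) \<and> int (card (A \<inter> G t)) \<le> \<lceil>\<beta> t\<rceil>)
              \<and> f A \<ge> (1 - 1 / exp 1)^2 * OPT)"
proof -
  define F where "F = fam V b"
  have finF: "finite F" unfolding F_def fam_def
    by (rule finite_subset[of _ "Pow V"]) (use finV in auto)
  have FV: "S \<subseteq> V" if "S \<in> F" for S using that unfolding F_def fam_def by simp
  have Fcard: "card S \<le> b" if "S \<in> F" for S using that unfolding F_def fam_def by simp
  have xfeas: "P0_feasible V m G \<alpha> \<beta> b x" using x_opt unfolding P0_optimal_def by simp
  have x01: "\<forall>S\<in>F. 0 \<le> x S \<and> x S \<le> 1" using xfeas unfolding P0_feasible_def F_def by simp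
  define y where "y t = (\<Sum>S\<in>F. x S * real (card (S \<inter> G t)))" for t
  have ybnd: "\<forall>t<m. \<alpha> t \<le> y t \<and> y t \<le> \<beta> t" using xfeas unfolding P0_feasible_def F_def y_def by simp
  have xsum: "(\<Sum>S\<in>F. x S) \<le> 1" using xfeas unfolding P0_feasible_def F_def by simp
  have GtV: "G t \<subseteq> V" if "t < m" for t using groups_cover that by blast
  have finGt: "finite (G t)" if "t < m" for t using GtV[OF that] finV finite_subset by blast
  have cardsplit: "card S = (\<Sum>t<m. card (S \<inter> G t))" if "S \<subseteq> V" for S
  proof -
    have "S = (\<Union>t<m. S \<inter> G t)" using that groups_cover by blast
    also have "card \<dots> = (\<Sum>t<m. card (S \<inter> G t))"
      by (rule card_UN_disjoint) (use finGt groups_disj in auto)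
    finally show ?thesis .
  qed
  define z where "z u = (\<Sum>S\<in>F. if u \<in> S then x S else 0)" for u
  have znn: "\<forall>u\<in>V. 0 \<le> z u" unfolding z_def using x01 by (auto intro: sum_nonneg)
  have zG: "(\<Sum>u\<in>G t. z u) = y t" if "t < m" for t
  proof -
    have "(\<Sum>u\<in>G t. z u) = (\<Sum>S\<in>F. \<Sum>u\<in>G t. if u \<in> S then x S else 0)"
      unfolding z_def by (rule sum.swap)
    also have "\<dots> = (\<Sum>S\<in>F. x S * real (card (S \<inter> G t)))"
    proof (rule sum.cong)
      fix S assume "S \<in> F"
      have "(\<Sum>u\<in>G t. if u \<in> S then x S else 0) = (\<Sum>u\<in>{u\<in>G t. u \<in> S}. x S)"
        by (rule sum.inter_filter[symmetric]) (use finGt that in auto)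
      also have "{u\<in>G t. u \<in> S} = S \<inter> G t" by blast
      finally show "(\<Sum>u\<in>G t. if u \<in> S then x S else 0) = x S * real (card (S \<inter> G t))" by simp
    qed simp
    finally show ?thesis unfolding y_def .
  qed
  have zU: "(\<Sum>u\<in>(\<Union>t\<in>T. G t). z u) = (\<Sum>t\<in>T. y t)" if "T \<subseteq> {..<m}" for T
  proof -
    have "(\<Sum>u\<in>(\<Union>t\<in>T. G t). z u) = (\<Sum>t\<in>T. \<Sum>u\<in>G t. z u)"
    proof (rule sum.UNION_disjoint)
      show "finite T" using finite_subset[OF that] by simp
      show "\<forall>i\<in>T. finite (G i)" using that finGt by blast
      show "\<forall>i\<in>T. \<forall>j\<in>T. i \<noteq> j \<longrightarrow> G i \<inter> G j = {}" using that groups_disj by blast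
    qed
    also have "\<dots> = (\<Sum>t\<in>T. y t)" using zG that by (auto intro: sum.cong)
    finally show ?thesis .
  qed
  have ynn: "0 \<le> y t" for t unfolding y_def using x01 by (auto intro: sum_nonneg)
  have ysum: "(\<Sum>t<m. y t) \<le> real b"
  proof -
    have "(\<Sum>t<m. y t) = (\<Sum>S\<in>F. x S * real (\<Sum>t<m. card (S \<inter> G t)))"
      unfolding y_def by (subst sum.swap) (simp add: sum_distrib_left)
    also have "\<dots> = (\<Sum>S\<in>F. x S * real (card S))"
      using cardsplit FV by (auto intro: sum.cong)
    also have "\<dots> \<le> (\<Sum>S\<in>F. x S * real b)"
      using x01 Fcard by (auto intro!: sum_mono mult_left_mono)
    also have "\<dots> = (\<Sum>S\<in>F. x S) * real b" by (simp add: sum_distrib_right)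
    also have "\<dots> \<le> real b" using xsum x01 by (intro mult_left_le_one_le) (auto intro: sum_nonneg)
    finally show ?thesis .
  qed
  have yV: "y t \<le> real (card (G t))" if tm: "t < m" for t
  proof -
    have "y t \<le> (\<Sum>S\<in>F. x S * real (card (G t)))"
      unfolding y_def using x01 finGt[OF tm]
      by (auto intro!: sum_mono mult_left_mono card_mono)
    also have "\<dots> = (\<Sum>S\<in>F. x S) * real (card (G t))" by (simp add: sum_distrib_right)
    also have "\<dots> \<le> real (card (G t))" using xsum x01 by (intro mult_left_le_one_le) (auto intro: sum_nonneg)
    finally show ?thesis .
  qed
  define l where "l t = nat \<lfloor>\<alpha> t\<rfloor>" for t
  define hi where "hi t = nat \<lceil>\<beta> t\<rceil>" for t
  have l_le: "real (l t) \<le> \<alpha> t" if "t < m" for t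
    using alpha_nonneg that unfolding l_def by (simp add: of_nat_nat)
  have hi_ge: "\<beta> t \<le> real (hi t)" if "t < m" for t
  proof -
    have b0: "0 \<le> \<beta> t" using beta_nonneg that by simp
    then have "0 \<le> \<lceil>\<beta> t\<rceil>" by simp
    then have "real (hi t) = of_int \<lceil>\<beta> t\<rceil>" unfolding hi_def by (simp add: of_nat_nat)
    then show ?thesis using le_of_int_ceiling[of "\<beta> t"] by linarith
  qed
  have l_hi: "l t \<le> hi t" if "t < m" for t
  proof -
    have "\<alpha> t \<le> y t" "y t \<le> \<beta> t" using ybnd that by auto
    then have "real (l t) \<le> real (hi t)" using l_le[OF that] hi_ge[OF that] by linarith
    then show ?thesis by simp
  qed
  have l_G: "l t \<le> card (G t)" if "t < m" for t
  proof -
    have "\<alpha> t \<le> y t" using ybnd that by auto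
    then have "real (l t) \<le> real (card (G t))" using l_le[OF that] yV[OF that] by linarith
    then show ?thesis by simp
  qed
  have lsum: "(\<Sum>t<m. l t) \<le> b"
  proof -
    have "real (\<Sum>t<m. l t) \<le> (\<Sum>t<m. y t)"
      unfolding of_nat_sum
    proof (rule sum_mono)
      fix t assume "t \<in> {..<m}"
      then have "t < m" by simp
      then show "real (l t) \<le> y t" using l_le ybnd by (meson order.trans)
    qed
    then show ?thesis using ysum by linarith
  qed
  define M where "M = {T. T \<subseteq> V \<and> (\<forall>t<m. card (T \<inter> G t) \<le> hi t) \<and> (\<Sum>t<m. max (card (T \<inter> G t)) (l t)) \<le> b}"
  have MV: "M \<subseteq> Pow V" unfolding M_def by auto
  have M0: "{} \<in> M" unfolding M_def using lsum by simp
  have down: "\<forall>A B. A \<subseteq> B \<longrightarrow> B \<in> M \<longrightarrow> A \<in> M"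
  proof (intro allI impI)
    fix A B assume AB: "A \<subseteq> B" and BM: "B \<in> M"
    have cm: "card (A \<inter> G t) \<le> card (B \<inter> G t)" if "t < m" for t
      by (rule card_mono) (use finGt that AB in auto)
    have "(\<Sum>t<m. max (card (A \<inter> G t)) (l t)) \<le> (\<Sum>t<m. max (card (B \<inter> G t)) (l t))"
    proof (rule sum_mono)
      fix t assume "t \<in> {..<m}"
      then have "card (A \<inter> G t) \<le> card (B \<inter> G t)" using cm by simp
      then show "max (card (A \<inter> G t)) (l t) \<le> max (card (B \<inter> G t)) (l t)" by simp
    qed
    moreover have "A \<subseteq> V" using AB BM unfolding M_def by blast
    moreover have "\<forall>t<m. card (A \<inter> G t) \<le> hi t"
    proof (intro allI impI)
      fix t assume "t < m"
      then show "card (A \<inter> G t) \<le> hi t" using cm[of t] BM unfolding M_def by auto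
    qed
    moreover have "(\<Sum>t<m. max (card (B \<inter> G t)) (l t)) \<le> b" using BM unfolding M_def by blast
    ultimately show "A \<in> M" unfolding M_def by auto
  qed
  have fmono: "\<forall>A B. A \<subseteq> B \<longrightarrow> B \<subseteq> V \<longrightarrow> f A \<le> f B"
    using f_mono unfolding monotone_set_fun_def by blast
  have fmarg: "\<forall>A B u. A \<subseteq> B \<longrightarrow> B \<subseteq> V \<longrightarrow> u \<in> V \<longrightarrow> f (insert u B) - f B \<le> f (insert u A) - f A"
    using marg_of_submod[OF f_mono f_submod] by blast
  have zD: "\<forall>H\<in>M. (\<Sum>u\<in>{u\<in>V - H. insert u H \<notin> M}. z u) \<le> real (card H)"
  proof
    fix H assume HM: "H \<in> M"
    have HV: "H \<subseteq> V" and Hhi: "\<forall>t<m. card (H \<inter> G t) \<le> hi t"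
      and HP: "(\<Sum>t<m. max (card (H \<inter> G t)) (l t)) \<le> b" using HM unfolding M_def by auto
    define c where "c t = card (H \<inter> G t)" for t
    define P where "P = (\<Sum>t<m. max (c t) (l t))"
    have Pb: "P \<le> b" using HP unfolding P_def c_def .
    have cardH: "card H = (\<Sum>t<m. c t)" using cardsplit[OF HV] unfolding c_def .
    define D where "D = {u\<in>V - H. insert u H \<notin> M}"
    have key: "hi t \<le> c t \<or> (P = b \<and> l t \<le> c t)" if uD: "u \<in> D" and t: "t < m" "u \<in> G t" for u t
    proof (rule ccontr)
      assume nk: "\<not> (hi t \<le> c t \<or> (P = b \<and> l t \<le> c t))"
      have uV: "u \<in> V" and uH: "u \<notin> H" and notM: "insert u H \<notin> M" using uD unfolding D_def by auto
      have ci: "card (insert u H \<inter> G s) = (if s = t then Suc (c s) else c s)" if s: "s < m" for s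
      proof (cases "s = t")
        case True
        have "insert u H \<inter> G s = insert u (H \<inter> G s)" using True t by blast
        then show ?thesis using True uH finGt[OF s] c_def by simp
      next
        case False
        have "u \<notin> G s" using groups_disj t s False by blast
        then have "insert u H \<inter> G s = H \<inter> G s" by blast
        then show ?thesis using False c_def by simp
      qed
      have hi_ok: "\<forall>s<m. card (insert u H \<inter> G s) \<le> hi s"
        using ci Hhi nk c_def by (auto simp: not_le)
      have "(\<Sum>s<m. max (card (insert u H \<inter> G s)) (l s))
            = (\<Sum>s<m. max (c s) (l s) + (if s = t then (if l t \<le> c t then 1 else 0) else 0))"
        by (rule sum.cong) (auto simp: ci max_def)
      also have "\<dots> = P + (if l t \<le> c t then 1 else 0)"
        unfolding P_def sum.distrib using t by (simp add: sum.delta)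
      finally have eqP: "(\<Sum>s<m. max (card (insert u H \<inter> G s)) (l s)) = P + (if l t \<le> c t then 1 else 0)" .
      have "insert u H \<subseteq> V" using uV HV by blast
      with notM hi_ok have "\<not> (\<Sum>s<m. max (card (insert u H \<inter> G s)) (l s)) \<le> b"
        unfolding M_def by blast
      then show False using eqP Pb nk by (auto split: if_splits)
    qed
    have Dfin: "finite D" unfolding D_def using finV by simp
    have coverD: "u \<in> (\<Union>t\<in>{t. t < m \<and> (hi t \<le> c t \<or> (P = b \<and> l t \<le> c t))}. G t)" if "u \<in> D" for u
    proof -
      have "u \<in> V" using that unfolding D_def by auto
      then obtain t where t: "t < m" "u \<in> G t" using groups_cover by blast
      then show ?thesis using key[OF that t] by blast
    qed
    define T where "T = {t. t < m \<and> (hi t \<le> c t \<or> (P = b \<and> l t \<le> c t))}"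
    have Tm: "T \<subseteq> {..<m}" unfolding T_def by auto
    have finU: "finite (\<Union>t\<in>T. G t)" 
    proof -
      have "(\<Union>t\<in>T. G t) \<subseteq> V" using Tm GtV by blast
      then show ?thesis using finV finite_subset by blast
    qed
    have "(\<Sum>u\<in>D. z u) \<le> (\<Sum>u\<in>(\<Union>t\<in>T. G t). z u)"
    proof (rule sum_mono2[OF finU])
      show "D \<subseteq> (\<Union>t\<in>T. G t)" using coverD unfolding T_def by blast
      fix u assume "u \<in> (\<Union>t\<in>T. G t) - D"
      then have "u \<in> V" using GtV Tm by blast
      then show "0 \<le> z u" using znn by blast
    qed
    also have "\<dots> = (\<Sum>t\<in>T. y t)" by (rule zU[OF Tm])
    also have "\<dots> \<le> real (\<Sum>t\<in>T. c t)"
    proof (cases "P = b")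
      case False
      then have T1: "T = {t. t < m \<and> hi t \<le> c t}" unfolding T_def by auto
      have "(\<Sum>t\<in>T. y t) \<le> (\<Sum>t\<in>T. real (c t))"
      proof (rule sum_mono)
        fix t assume "t \<in> T"
        then have "t < m" "hi t \<le> c t" using T1 by auto
        then show "y t \<le> real (c t)" using ybnd hi_ge by (meson of_nat_le_iff order.trans)
      qed
      then show ?thesis by simp
    next
      case True
      have T2: "T = {t. t < m \<and> l t \<le> c t}" unfolding T_def using True l_hi by (auto dest: order.trans)
      have finT: "finite T" using Tm finite_subset by blast
      have "(\<Sum>t<m. y t) = (\<Sum>t\<in>{..<m} - T. y t) + (\<Sum>t\<in>T. y t)"
        by (rule sum.subset_diff[OF Tm]) simp
      moreover have "(\<Sum>t\<in>{..<m} - T. real (l t)) \<le> (\<Sum>t\<in>{..<m} - T. y t)"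
        by (rule sum_mono) (use l_le ybnd in \<open>auto intro: order.trans\<close>)
      moreover have "real b = (\<Sum>t\<in>{..<m} - T. real (l t)) + (\<Sum>t\<in>T. real (c t))"
      proof -
        have "real b = real P" using True by simp
        also have "\<dots> = (\<Sum>t<m. real (max (c t) (l t)))" unfolding P_def of_nat_sum ..
        also have "\<dots> = (\<Sum>t\<in>{..<m} - T. real (max (c t) (l t))) + (\<Sum>t\<in>T. real (max (c t) (l t)))"
          by (rule sum.subset_diff[OF Tm]) simp
        also have "(\<Sum>t\<in>{..<m} - T. real (max (c t) (l t))) = (\<Sum>t\<in>{..<m} - T. real (l t))"
          by (rule sum.cong) (auto simp: T2)
        also have "(\<Sum>t\<in>T. real (max (c t) (l t))) = (\<Sum>t\<in>T. real (c t))"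
          by (rule sum.cong) (auto simp: T2)
        finally show ?thesis .
      qed
      ultimately have "(\<Sum>t\<in>T. y t) \<le> (\<Sum>t\<in>T. real (c t))" using ysum by linarith
      then show ?thesis by simp
    qed
    also have "\<dots> \<le> real (\<Sum>t<m. c t)"
      unfolding of_nat_le_iff by (rule sum_mono2[OF _ Tm]) auto
    also have "\<dots> = real (card H)" using cardH by simp
    finally show "(\<Sum>u\<in>{u\<in>V - H. insert u H \<notin> M}. z u) \<le> real (card H)" unfolding D_def .
  qed
  obtain Gr where GrM: "Gr \<in> M" and Gbound: "(\<Sum>u\<in>V - Gr. z u * (f (insert u Gr) - f Gr)) \<le> f Gr - f {}"
    using greedy_bound[OF finV MV M0 down fmono fmarg znn zD] by blast
  have GrV: "Gr \<subseteq> V" using GrM MV by blast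
  have fGr0: "0 \<le> f Gr" using f_nonneg GrV by blast
  have f00: "0 \<le> f {}" using f_nonneg by blast
  define mg where "mg u = f (insert u Gr) - f Gr" for u
  have OPT_le: "OPT \<le> 2 * f Gr"
  proof -
    have "OPT = (\<Sum>S\<in>F. x S * f S)" unfolding OPT_def P0_value_def F_def ..
    also have "\<dots> \<le> (\<Sum>S\<in>F. x S * (f Gr + (\<Sum>u\<in>V - Gr. if u \<in> S then mg u else 0)))"
    proof (rule sum_mono)
      fix S assume SF: "S \<in> F"
      have SV: "S \<subseteq> V" using FV[OF SF] .
      have "f S \<le> f (Gr \<union> S)" using fmono GrV SV by blast
      also have "\<dots> \<le> f Gr + (\<Sum>u\<in>S - Gr. mg u)"
        unfolding mg_def by (rule subadd_marg[OF f_mono f_submod GrV]) (use SV finV finite_subset in auto)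
      also have "(\<Sum>u\<in>S - Gr. mg u) = (\<Sum>u\<in>V - Gr. if u \<in> S then mg u else 0)"
      proof -
        have "(\<Sum>u\<in>V - Gr. if u \<in> S then mg u else 0) = (\<Sum>u\<in>{u\<in>V - Gr. u \<in> S}. mg u)"
          by (rule sum.inter_filter[symmetric]) (use finV in auto)
        also have "{u\<in>V - Gr. u \<in> S} = S - Gr" using SV by blast
        finally show ?thesis by simp
      qed
      finally show "x S * f S \<le> x S * (f Gr + (\<Sum>u\<in>V - Gr. if u \<in> S then mg u else 0))"
        using x01 SF by (simp add: mult_left_mono)
    qed
    also have "\<dots> = (\<Sum>S\<in>F. x S) * f Gr + (\<Sum>S\<in>F. \<Sum>u\<in>V - Gr. if u \<in> S then x S * mg u else 0)"
      by (simp add: algebra_simps sum.distrib sum_distrib_left sum_distrib_right if_distrib cong: if_cong)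
    also have "(\<Sum>S\<in>F. \<Sum>u\<in>V - Gr. if u \<in> S then x S * mg u else 0) = (\<Sum>u\<in>V - Gr. z u * mg u)"
      unfolding z_def sum_distrib_right by (subst sum.swap) (auto intro!: sum.cong)
    also have "\<dots> \<le> f Gr" using Gbound f00 unfolding mg_def by linarith
    also have "(\<Sum>S\<in>F. x S) * f Gr \<le> f Gr" using xsum x01 fGr0 by (intro mult_left_le_one_le) (auto intro: sum_nonneg)
    finally show ?thesis by linarith
  qed
  have GrHi: "\<forall>t<m. card (Gr \<inter> G t) \<le> hi t" and GrP: "(\<Sum>t<m. max (card (Gr \<inter> G t)) (l t)) \<le> b"
    using GrM unfolding M_def by auto
  have exA: "\<forall>t. \<exists>At. t < m \<longrightarrow> (Gr \<inter> G t \<subseteq> At \<and> At \<subseteq> G t \<and> card At = max (card (Gr \<inter> G t)) (l t))"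
  proof (intro allI)
    fix t
    show "\<exists>At. t < m \<longrightarrow> (Gr \<inter> G t \<subseteq> At \<and> At \<subseteq> G t \<and> card At = max (card (Gr \<inter> G t)) (l t))"
    proof (cases "t < m")
      case False then show ?thesis by blast
    next
      case True
      define k where "k = max (card (Gr \<inter> G t)) (l t)"
      have fg: "finite (G t)" using finGt[OF True] .
      have cGr: "card (Gr \<inter> G t) \<le> card (G t)" by (rule card_mono[OF fg]) blast
      have kle: "k \<le> card (G t)" unfolding k_def using cGr l_G[OF True] by simp
      have cd: "card (G t - Gr) = card (G t) - card (Gr \<inter> G t)"
      proof -
        have "G t - Gr = G t - (Gr \<inter> G t)" by blast
        then show ?thesis using card_Diff_subset[of "Gr \<inter> G t" "G t"] fg by (simp add: finite_subset)
      qed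
      obtain T0 where T0: "T0 \<subseteq> G t - Gr" "card T0 = k - card (Gr \<inter> G t)" "finite T0"
        using obtain_subset_with_card_n[of "k - card (Gr \<inter> G t)" "G t - Gr"] cd kle by force
      have fin1: "finite (Gr \<inter> G t)" using fg by simp
      have "card ((Gr \<inter> G t) \<union> T0) = card (Gr \<inter> G t) + card T0"
        by (rule card_Un_disjoint) (use fin1 T0 in auto)
      also have "\<dots> = k" using T0(2) unfolding k_def by simp
      finally have "card ((Gr \<inter> G t) \<union> T0) = k" .
      then show ?thesis using T0(1) unfolding k_def by blast
    qed
  qed
  then obtain Af where Af: "\<forall>t. t < m \<longrightarrow> (Gr \<inter> G t \<subseteq> Af t \<and> Af t \<subseteq> G t \<and> card (Af t) = max (card (Gr \<inter> G t)) (l t))"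
    by metis
  define A where "A = (\<Union>t<m. Af t)"
  have AV: "A \<subseteq> V" unfolding A_def using Af GtV by blast
  have GrA: "Gr \<subseteq> A"
  proof
    fix u assume "u \<in> Gr"
    then have "u \<in> V" using GrV by blast
    then obtain t where "t < m" "u \<in> G t" using groups_cover by blast
    then show "u \<in> A" using Af \<open>u \<in> Gr\<close> unfolding A_def by blast
  qed
  have AG: "A \<inter> G t = Af t" if t: "t < m" for t
  proof
    show "Af t \<subseteq> A \<inter> G t" using Af t unfolding A_def by blast
    show "A \<inter> G t \<subseteq> Af t"
    proof
      fix u assume "u \<in> A \<inter> G t"
      then obtain s where s: "s < m" "u \<in> Af s" "u \<in> G t" unfolding A_def by blast
      then have "u \<in> G s" using Af by blast
      then have "s = t" using groups_disj s t by blast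
      then show "u \<in> Af t" using s by simp
    qed
  qed
  have cardA: "card A \<le> b"
  proof -
    have "card A \<le> (\<Sum>t<m. card (Af t))" unfolding A_def by (rule card_UN_le) simp
    also have "\<dots> = (\<Sum>t<m. max (card (Gr \<inter> G t)) (l t))" using Af by (auto intro: sum.cong)
    finally show ?thesis using GrP by linarith
  qed
  have Acons: "\<forall>t<m. \<lfloor>\<alpha> t\<rfloor> \<le> int (card (A \<inter> G t)) \<and> int (card (A \<inter> G t)) \<le> \<lceil>\<beta> t\<rceil>"
  proof (intro allI impI)
    fix t assume t: "t < m"
    have cA: "card (A \<inter> G t) = max (card (Gr \<inter> G t)) (l t)" using AG[OF t] Af t by simp
    have a0: "0 \<le> \<alpha> t" "0 \<le> \<beta> t" using alpha_nonneg beta_nonneg t by auto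
    have il: "int (l t) = \<lfloor>\<alpha> t\<rfloor>" unfolding l_def using a0 by simp
    have ih: "int (hi t) = \<lceil>\<beta> t\<rceil>" unfolding hi_def using a0 by simp
    have "max (card (Gr \<inter> G t)) (l t) \<le> hi t" using GrHi l_hi t by simp
    then show "\<lfloor>\<alpha> t\<rfloor> \<le> int (card (A \<inter> G t)) \<and> int (card (A \<inter> G t)) \<le> \<lceil>\<beta> t\<rceil>"
      using cA il ih by linarith
  qed
  have Afeas: "P2_feasible V m G \<alpha> \<beta> b A"
    unfolding P2_feasible_def fam_def using AV cardA Acons by blast
  have fA: "f Gr \<le> f A" using fmono GrA AV by blast
  have OPT0: "0 \<le> OPT"
    unfolding OPT_def P0_value_def using x01 f_nonneg FV unfolding F_def by (auto intro!: sum_nonneg)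
  have cst: "(1 - 1 / exp 1)^2 \<le> (1/2::real)"
  proof -
    have e3: "exp 1 \<le> (3::real)" by (rule exp_le)
    have e1: "1 \<le> exp (1::real)" by simp
    have "1 / 3 \<le> 1 / exp (1::real)" using e3 by (simp add: frac_le)
    moreover have "1 / exp (1::real) \<le> 1" using e1 by simp
    ultimately have "0 \<le> 1 - 1 / exp (1::real)" "1 - 1 / exp (1::real) \<le> 2/3" by linarith+
    then have "(1 - 1 / exp (1::real))^2 \<le> (2/3)^2" by (intro power_mono) auto
    moreover have "(2/3::real)^2 \<le> 1/2" by (simp add: power2_eq_square)
    ultimately show ?thesis by (rule order.trans)
  qed
  have bound: "(1 - 1 / exp 1)^2 * OPT \<le> f A"
  proof -
    have "(1 - 1 / exp 1)^2 * OPT \<le> (1/2) * OPT" using cst OPT0 by (rule mult_right_mono)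
    also have "\<dots> \<le> f Gr" using OPT_le by simp
    finally show ?thesis using fA by linarith
  qed
  have part2: "\<forall>A'. P2_optimal V m G \<alpha> \<beta> b f A' \<longrightarrow> f A' \<ge> (1 - 1 / exp 1)^2 * OPT"
  proof (intro allI impI)
    fix A' assume "P2_optimal V m G \<alpha> \<beta> b f A'"
    then have "f A \<le> f A'" using Afeas unfolding P2_optimal_def by blast
    then show "f A' \<ge> (1 - 1 / exp 1)^2 * OPT" using bound by linarith
  qed
  show ?thesis using Afeas part2 AV cardA Acons bound by blast
qed

end
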